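(* Let $\mathcal Y\subset\mathbb R^d$ be a finite set such that no element of $\mathcal Y$ is a strict convex combination of other elements of $\mathcal Y$. Let $\varepsilon>0$ and let $\mathbf Z$ be a standard multivariate normal random vector on $\mathbb R^d$. For $s_1,s_2\in V_\Delta$ with $s_1\neq s_2$, define $f_k(y;Z)=s_k(y)+\varepsilon Z^\top y$ for $k=1,2$. Then $$\mathbb P_{\mathbf Z}\Big(\operatorname*{argmax}_{y\in\mathcal Y}f_1(y;\mathbf Z)\cap\operatorname*{argmax}_{y\in\mathcal Y}f_2(y;\mathbf Z)=\emptyset\Big)>0.$$
   Context: $\mathbb R^{\mathcal Y}$ is the space of vectors $s$ indexed by $\mathcal Y$ with components $s(y)$, and $V_\Delta=\{s\in\mathbb R^{\mathcal Y}:\sum_{y\in\mathcal Y}s(y)=0\}$ (the direction of the affine hull of the probability simplex $\Delta^{\mathcal Y}$). *)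

theory Defs
  imports "HOL-Probability.Probability"
begin

text \<open>Vectors of R^d are modelled as functions "d => real" with a finite index type d
  (so d = CARD('d) \<ge> 1).\<close>

definition inner_fun :: "('d::finite \<Rightarrow> real) \<Rightarrow> ('d \<Rightarrow> real) \<Rightarrow> real" where
  "inner_fun z y = (\<Sum>i\<in>UNIV. z i * y i)"

definition strict_convex_comb_of_others :: "('d::finite \<Rightarrow> real) set \<Rightarrow> ('d \<Rightarrow> real) \<Rightarrow> bool" where
  "strict_convex_comb_of_others Y y \<longleftrightarrow>
     (\<exists>S u. finite S \<and> S \<noteq> {} \<and> S \<subseteq> Y - {y} \<and> (\<forall>x\<in>S. u x > (0::real)) \<and>
            sum u S = 1 \<and> (\<lambda>i. \<Sum>x\<in>S. u x * x i) = y)"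

definition V_Delta :: "'y set \<Rightarrow> ('y \<Rightarrow> real) set" where
  "V_Delta Y = {s. s \<in> extensional Y \<and> sum s Y = 0}"

definition argmax_set :: "'y set \<Rightarrow> ('y \<Rightarrow> real) \<Rightarrow> 'y set" where
  "argmax_set Y f = {y\<in>Y. \<forall>y'\<in>Y. f y' \<le> f y}"

definition std_normal_vec :: "('d::finite \<Rightarrow> real) measure" where
  "std_normal_vec = PiM UNIV (\<lambda>_. density lborel std_normal_density)"

end

theory Submission
  imports Defs
begin

lemma interval_pos:
  fixes a b :: real assumes "a < b"
  shows "emeasure (density lborel std_normal_density) {a<..<b} > 0"
proof (rule ccontr)
  assume "\<not> ?thesis"
  hence "emeasure (density lborel std_normal_density) {a<..<b} = 0" by simp
  hence "(\<integral>\<^sup>+x. ennreal (std_normal_density x) * indicator {a<..<b} x \<partial>lborel) = 0"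
    by (simp add: emeasure_density)
  hence "AE x in lborel. ennreal (std_normal_density x) * indicator {a<..<b} x = 0"
    by (subst (asm) nn_integral_0_iff_AE) auto
  hence "AE x in lborel. x \<notin> {a<..<b}"
    by eventually_elim (auto simp: std_normal_density_def indicator_def)
  hence "emeasure lborel {a<..<b} = 0"
    by (subst (asm) AE_iff_measurable[of "{a<..<b}"]) auto
  thus False using assms by simp
qed

lemma box_pos:
  fixes z0 :: "'d::finite \<Rightarrow> real" assumes "\<delta> > 0"
  shows "emeasure std_normal_vec (PiE UNIV (\<lambda>i. {z0 i - \<delta><..<z0 i + \<delta>})) > 0"
proof -
  interpret N: prob_space "density lborel std_normal_density" by (rule prob_space_normal_density) simp
  interpret P: product_sigma_finite "\<lambda>_::'d. density lborel std_normal_density"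
    by (simp add: product_sigma_finite_def N.sigma_finite_measure_axioms)
  have "emeasure std_normal_vec (PiE UNIV (\<lambda>i. {z0 i - \<delta><..<z0 i + \<delta>})) =
     (\<Prod>i\<in>UNIV. emeasure (density lborel std_normal_density) {z0 i - \<delta><..<z0 i + \<delta>})"
    unfolding std_normal_vec_def by (rule P.emeasure_PiM) auto
  also have "\<dots> > 0" using assms interval_pos
    by (auto simp: zero_less_iff_neq_zero prod_zero_iff)
  finally show ?thesis .
qed


lemma inner_fun_vec: "inner (vec_lambda w) (vec_lambda y) = inner_fun w y"
  by (simp add: inner_vec_def inner_fun_def)

lemma exposed:
  fixes Y :: "('d::finite \<Rightarrow> real) set"
  assumes fin: "finite Y" and y0: "\<not> strict_convex_comb_of_others Y y0"
  shows "\<exists>w. \<forall>y\<in>Y-{y0}. inner_fun w y < inner_fun w y0"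
proof -
  define T where "T = Y - {y0}"
  have finT: "finite T" using fin T_def by simp
  define \<phi> :: "('d \<Rightarrow> real) \<Rightarrow> real^'d" where "\<phi> = vec_lambda"
  have inj: "inj \<phi>" unfolding \<phi>_def by (metis injI vec_lambda_inverse UNIV_I)
  define S where "S = convex hull (\<phi> ` T)"
  have "convex S" unfolding S_def by simp
  moreover have "closed S" unfolding S_def
    using finT by (intro compact_imp_closed compact_convex_hull finite_imp_compact) auto
  moreover have "\<phi> y0 \<notin> S"
  proof
    assume "\<phi> y0 \<in> S"
    then obtain u where u: "\<forall>x\<in>\<phi>`T. 0 \<le> u x" "sum u (\<phi>`T) = 1"
       "(\<Sum>x\<in>\<phi>`T. u x *\<^sub>R x) = \<phi> y0"
      unfolding S_def using convex_hull_finite[of "\<phi>`T"] finT by auto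
    define u' where "u' = u \<circ> \<phi>"
    have u1: "sum u' T = 1" using u(2) inj unfolding u'_def
      by (metis inj_on_subset subset_UNIV sum.reindex)
    have u2: "(\<Sum>x\<in>T. u' x *\<^sub>R \<phi> x) = \<phi> y0" using u(3) inj unfolding u'_def
      by (simp add: sum.reindex inj_on_subset)
    have u0: "\<forall>x\<in>T. 0 \<le> u' x" using u(1) unfolding u'_def by auto
    define T' where "T' = {x\<in>T. u' x > 0}"
    have sub: "T' \<subseteq> T" unfolding T'_def by auto
    have z: "\<forall>x\<in>T - T'. u' x = 0" using u0 unfolding T'_def by force
    have s1: "sum u' T' = 1" using u1 sum.mono_neutral_left[OF finT sub, of u'] z by simp
    have s2: "(\<Sum>x\<in>T'. u' x *\<^sub>R \<phi> x) = \<phi> y0"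
      using u2 sum.mono_neutral_left[OF finT sub, of "\<lambda>x. u' x *\<^sub>R \<phi> x"] z by simp
    have comp: "(\<lambda>i. \<Sum>x\<in>T'. u' x * x i) = y0"
    proof
      fix i
      have "(\<Sum>x\<in>T'. u' x *\<^sub>R \<phi> x) $ i = \<phi> y0 $ i" using s2 by simp
      thus "(\<Sum>x\<in>T'. u' x * x i) = y0 i" by (simp add: \<phi>_def)
    qed
    have "T' \<noteq> {}" using s1 by auto
    moreover have "finite T'" using finT sub finite_subset by blast
    ultimately have "strict_convex_comb_of_others Y y0"
      unfolding strict_convex_comb_of_others_def
      using sub s1 comp T_def T'_def by blast
    thus False using y0 by simp
  qed
  ultimately obtain a b where ab: "inner a (\<phi> y0) < b" "\<forall>x\<in>S. inner a x > b"
    using separating_hyperplane_closed_point by blast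
  show ?thesis
  proof (intro exI ballI)
    fix y assume "y \<in> Y - {y0}"
    hence "\<phi> y \<in> S" unfolding S_def T_def by (simp add: hull_inc)
    hence "inner a (\<phi> y) > b" using ab by auto
    hence "inner_fun (\<lambda>i. - (a $ i)) y < inner_fun (\<lambda>i. - (a $ i)) y0"
      using ab(1) unfolding inner_fun_def \<phi>_def by (simp add: inner_vec_def sum_negf)
    thus "inner_fun (\<lambda>i. - (a $ i)) y < inner_fun (\<lambda>i. - (a $ i)) y0" .
  qed
qed


lemma argmax_Max:
  assumes "finite Y" "y \<in> argmax_set Y f"
  shows "Max (f ` Y) = f y"
  using assms unfolding argmax_set_def by (intro Max_eqI) auto

lemma inner_fun_scale: "inner_fun (\<lambda>i. t * w i) y = t * inner_fun w y"
  unfolding inner_fun_def by (simp add: sum_distrib_left mult.assoc)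

lemma large_t:
  fixes Y :: "('d::finite \<Rightarrow> real) set"
  assumes fin: "finite Y" and "y0 \<in> Y" and eps: "\<epsilon> > 0"
    and w: "\<forall>y\<in>Y-{y0}. inner_fun w y < inner_fun w y0"
  shows "eventually (\<lambda>t. y0 \<in> argmax_set Y (\<lambda>y. s y + \<epsilon> * inner_fun (\<lambda>i. t * w i) y)) at_top"
proof -
  have "\<forall>y\<in>Y. eventually (\<lambda>t. s y + \<epsilon> * inner_fun (\<lambda>i. t * w i) y \<le> s y0 + \<epsilon> * inner_fun (\<lambda>i. t * w i) y0) at_top"
  proof
    fix y assume y: "y \<in> Y"
    show "eventually (\<lambda>t. s y + \<epsilon> * inner_fun (\<lambda>i. t * w i) y \<le> s y0 + \<epsilon> * inner_fun (\<lambda>i. t * w i) y0) at_top"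
    proof (cases "y = y0")
      case True thus ?thesis by simp
    next
      case False
      define g where "g = inner_fun w y0 - inner_fun w y"
      have g: "g > 0" using w y False g_def by auto
      have eg: "\<epsilon> * g > 0" using g eps by simp
      show ?thesis unfolding eventually_at_top_linorder
      proof (intro exI allI impI)
        fix t assume "t \<ge> (s y - s y0) / (\<epsilon> * g)"
        hence "(s y - s y0) \<le> t * (\<epsilon> * g)" using eg by (simp add: pos_divide_le_eq)
        thus "s y + \<epsilon> * inner_fun (\<lambda>i. t * w i) y \<le> s y0 + \<epsilon> * inner_fun (\<lambda>i. t * w i) y0"
          unfolding inner_fun_scale g_def by (simp add: algebra_simps)
      qed
    qed
  qed
  hence "eventually (\<lambda>t. \<forall>y\<in>Y. s y + \<epsilon> * inner_fun (\<lambda>i. t * w i) y \<le> s y0 + \<epsilon> * inner_fun (\<lambda>i. t * w i) y0) at_top"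
    using fin by (simp add: eventually_ball_finite)
  thus ?thesis using assms(2) unfolding argmax_set_def by (auto elim: eventually_mono)
qed

lemma cont_Max:
  fixes F :: "'y \<Rightarrow> real \<Rightarrow> real"
  assumes "finite Y" "Y \<noteq> {}" "\<forall>y\<in>Y. continuous_on UNIV (F y)"
  shows "continuous_on UNIV (\<lambda>l. Max ((\<lambda>y. F y l) ` Y))"
  using assms
proof (induction Y rule: finite_ne_induct)
  case (singleton x) thus ?case by simp
next
  case (insert x F')
  have "(\<lambda>l. Max ((\<lambda>y. F y l) ` insert x F')) = (\<lambda>l. max (F x l) (Max ((\<lambda>y. F y l) ` F')))"
    using insert by (simp add: Max_insert)
  thus ?case using insert by (auto intro!: continuous_intros)
qed

lemma box_lemma:
  fixes z z0 :: "'d::finite \<Rightarrow> real"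
  assumes "\<forall>i. \<bar>z i - z0 i\<bar> < \<delta>"
  shows "\<bar>inner_fun z x - inner_fun z0 x\<bar> \<le> \<delta> * (\<Sum>i\<in>UNIV. \<bar>x i\<bar>)"
proof -
  have "\<bar>inner_fun z x - inner_fun z0 x\<bar> = \<bar>\<Sum>i\<in>UNIV. (z i - z0 i) * x i\<bar>"
    unfolding inner_fun_def by (simp add: sum_subtractf left_diff_distrib)
  also have "\<dots> \<le> (\<Sum>i\<in>UNIV. \<bar>(z i - z0 i) * x i\<bar>)" by (rule sum_abs)
  also have "\<dots> \<le> (\<Sum>i\<in>UNIV. \<delta> * \<bar>x i\<bar>)"
    using assms by (intro sum_mono) (simp add: abs_mult mult_right_mono less_imp_le)
  finally show ?thesis by (simp add: sum_distrib_left)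
qed

lemma not_argmax_stable:
  fixes Y :: "('d::finite \<Rightarrow> real) set"
  assumes "y \<in> Y" "y \<notin> argmax_set Y (\<lambda>y. s y + \<epsilon> * inner_fun z0 y)" "\<epsilon> > 0"
  shows "eventually (\<lambda>\<delta>. \<forall>z. (\<forall>i. \<bar>z i - z0 i\<bar> < \<delta>) \<longrightarrow>
            y \<notin> argmax_set Y (\<lambda>y. s y + \<epsilon> * inner_fun z y)) (at_right 0)"
proof -
  obtain y' where y': "y' \<in> Y" "s y' + \<epsilon> * inner_fun z0 y' > s y + \<epsilon> * inner_fun z0 y"
    using assms unfolding argmax_set_def by force
  define g where "g = s y' + \<epsilon> * inner_fun z0 y' - (s y + \<epsilon> * inner_fun z0 y)"
  have g: "g > 0" using y' g_def by simp
  define R where "R = 1 + (\<Sum>i\<in>UNIV. \<bar>y i\<bar>) + (\<Sum>i\<in>UNIV. \<bar>y' i\<bar>)"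
  have R: "R \<ge> 1" unfolding R_def by (simp add: sum_nonneg add_nonneg_nonneg)
  have pos: "g / (2 * \<epsilon> * R) > 0" using g R assms(3) by simp
  show ?thesis unfolding eventually_at_right_field
  proof (intro exI conjI allI impI)
    show "g / (2 * \<epsilon> * R) > 0" by (rule pos)
    fix \<delta> z assume d: "0 < \<delta>" "\<delta> < g / (2 * \<epsilon> * R)" and z: "\<forall>i. \<bar>z i - z0 i\<bar> < \<delta>"
    have b1: "\<bar>inner_fun z y - inner_fun z0 y\<bar> \<le> \<delta> * (\<Sum>i\<in>UNIV. \<bar>y i\<bar>)"
      using box_lemma z by blast
    have b2: "\<bar>inner_fun z y' - inner_fun z0 y'\<bar> \<le> \<delta> * (\<Sum>i\<in>UNIV. \<bar>y' i\<bar>)"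
      using box_lemma z by blast
    have "\<delta> * (\<Sum>i\<in>UNIV. \<bar>y i\<bar>) + \<delta> * (\<Sum>i\<in>UNIV. \<bar>y' i\<bar>) < \<delta> * R"
      using d unfolding R_def by (simp add: algebra_simps)
    also have "\<delta> * R < g / (2 * \<epsilon>)" using d R assms(3)
      by (simp add: field_simps)
    finally have "\<epsilon> * (\<delta> * (\<Sum>i\<in>UNIV. \<bar>y i\<bar>) + \<delta> * (\<Sum>i\<in>UNIV. \<bar>y' i\<bar>)) < g / 2"
      using assms(3) by (simp add: field_simps)
    moreover have "\<epsilon> * \<bar>inner_fun z y - inner_fun z0 y\<bar> \<le> \<epsilon> * (\<delta> * (\<Sum>i\<in>UNIV. \<bar>y i\<bar>))"
      using b1 assms(3) by (simp add: mult_left_mono)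
    moreover have "\<epsilon> * \<bar>inner_fun z y' - inner_fun z0 y'\<bar> \<le> \<epsilon> * (\<delta> * (\<Sum>i\<in>UNIV. \<bar>y' i\<bar>))"
      using b2 assms(3) by (simp add: mult_left_mono)
    moreover have "\<epsilon> * (inner_fun z y - inner_fun z0 y) \<le> \<epsilon> * \<bar>inner_fun z y - inner_fun z0 y\<bar>"
      using assms(3) by (intro mult_left_mono) auto
    moreover have "\<epsilon> * (inner_fun z0 y' - inner_fun z y') \<le> \<epsilon> * \<bar>inner_fun z y' - inner_fun z0 y'\<bar>"
      using assms(3) by (intro mult_left_mono) auto
    ultimately have "\<epsilon> * inner_fun z y - \<epsilon> * inner_fun z0 y + (\<epsilon> * inner_fun z0 y' - \<epsilon> * inner_fun z y') < g / 2"
      by (simp add: distrib_left right_diff_distrib)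
    hence "s y' + \<epsilon> * inner_fun z y' > s y + \<epsilon> * inner_fun z y" using g unfolding g_def by simp
    thus "y \<notin> argmax_set Y (\<lambda>y. s y + \<epsilon> * inner_fun z y)"
      using y' unfolding argmax_set_def by force
  qed
qed

lemma meas_inner[measurable]: "(\<lambda>z. inner_fun z y) \<in> borel_measurable (std_normal_vec :: ('d::finite \<Rightarrow> real) measure)"
  unfolding inner_fun_def std_normal_vec_def by measurable
lemma A: "(\<lambda>x. s y + \<epsilon> * inner_fun x y) \<in> borel_measurable (std_normal_vec :: ('d::finite \<Rightarrow> real) measure)"
  by measurable
lemma B[measurable]: "Measurable.pred (std_normal_vec :: ('d::finite \<Rightarrow> real) measure) (\<lambda>x. s y' + \<epsilon> * inner_fun x y' \<le> s y + \<epsilon> * inner_fun x y)"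
  unfolding Measurable.pred_def by (rule borel_measurable_le[OF A A])
lemma meas_set:
  fixes Y :: "('d::finite \<Rightarrow> real) set"
  assumes "finite Y"
  shows "{z \<in> space std_normal_vec.
              argmax_set Y (\<lambda>y. s1 y + \<epsilon> * inner_fun z y)
              \<inter> argmax_set Y (\<lambda>y. s2 y + \<epsilon> * inner_fun z y) = {}} \<in> sets std_normal_vec"
proof -
  have [measurable]: "finite Y" by fact
  have eq: "{z \<in> space std_normal_vec.
              argmax_set Y (\<lambda>y. s1 y + \<epsilon> * inner_fun z y)
              \<inter> argmax_set Y (\<lambda>y. s2 y + \<epsilon> * inner_fun z y) = {}} =
     {z \<in> space std_normal_vec. \<forall>y\<in>Y. \<not> ((\<forall>y'\<in>Y. s1 y' + \<epsilon> * inner_fun z y' \<le> s1 y + \<epsilon> * inner_fun z y)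
        \<and> (\<forall>y'\<in>Y. s2 y' + \<epsilon> * inner_fun z y' \<le> s2 y + \<epsilon> * inner_fun z y))}"
    unfolding argmax_set_def by blast
  show ?thesis unfolding eq using assms by measurable
qed

lemma inner_fun_comb: "inner_fun (\<lambda>i. (1 - l) * za i + l * zb i) y = (1 - l) * inner_fun za y + l * inner_fun zb y"
proof -
  have "(\<Sum>i\<in>UNIV. ((1 - l) * za i + l * zb i) * y i) = (\<Sum>i\<in>UNIV. (1 - l) * (za i * y i) + l * (zb i * y i))"
    by (rule sum.cong) (simp_all add: algebra_simps)
  also have "\<dots> = (1 - l) * (\<Sum>i\<in>UNIV. za i * y i) + l * (\<Sum>i\<in>UNIV. zb i * y i)"
    by (simp only: sum.distrib sum_distrib_left)
  finally show ?thesis unfolding inner_fun_def .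
qed

theorem lemma2:
  fixes Y :: "('d::finite \<Rightarrow> real) set"
    and \<epsilon> :: real
    and s1 s2 :: "('d \<Rightarrow> real) \<Rightarrow> real"
  assumes "finite Y"
    and "\<forall>y\<in>Y. \<not> strict_convex_comb_of_others Y y"
    and "\<epsilon> > 0"
    and "s1 \<in> V_Delta Y" and "s2 \<in> V_Delta Y" and "s1 \<noteq> s2"
  shows "measure std_normal_vec
           {z \<in> space std_normal_vec.
              argmax_set Y (\<lambda>y. s1 y + \<epsilon> * inner_fun z y)
              \<inter> argmax_set Y (\<lambda>y. s2 y + \<epsilon> * inner_fun z y) = {}} > 0"
proof -
  note fin = assms(1) and eps = assms(3)
  define A1 where "A1 z = argmax_set Y (\<lambda>y. s1 y + \<epsilon> * inner_fun z y)" for z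
  define A2 where "A2 z = argmax_set Y (\<lambda>y. s2 y + \<epsilon> * inner_fun z y)" for z
  have ex: "\<exists>z0. A1 z0 \<inter> A2 z0 = {}"
  proof (rule ccontr)
    assume "\<not> ?thesis"
    have A1Y: "A1 z \<subseteq> Y" for z unfolding A1_def argmax_set_def by auto
    have common: "\<forall>z. \<exists>y\<in>Y. y \<in> A1 z \<and> y \<in> A2 z"
    proof
      fix z
      have "A1 z \<inter> A2 z \<noteq> {}" using \<open>\<not> (\<exists>z0. A1 z0 \<inter> A2 z0 = {})\<close> by simp
      then obtain y where "y \<in> A1 z" "y \<in> A2 z" by blast
      thus "\<exists>y\<in>Y. y \<in> A1 z \<and> y \<in> A2 z" using A1Y by blast
    qed
    define D where "D z = Max ((\<lambda>y. s1 y + \<epsilon> * inner_fun z y) ` Y)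
                         - Max ((\<lambda>y. s2 y + \<epsilon> * inner_fun z y) ` Y)" for z
    have Dy: "D z = s1 y - s2 y" if "y \<in> A1 z" "y \<in> A2 z" for y z
      unfolding D_def
      using argmax_Max[OF fin that(1)[unfolded A1_def]] argmax_Max[OF fin that(2)[unfolded A2_def]]
      by simp
    have Drange: "D z \<in> (\<lambda>y. s1 y - s2 y) ` Y" for z
    proof -
      obtain y where y: "y \<in> Y" "y \<in> A1 z" "y \<in> A2 z" using common by blast
      show ?thesis using Dy[OF y(2,3)] y(1) by (rule image_eqI)
    qed
    have zy: "\<exists>z. a \<in> A1 z \<and> a \<in> A2 z" if a: "a \<in> Y" for a
    proof -
      obtain w where w: "\<forall>y\<in>Y-{a}. inner_fun w y < inner_fun w a"
        using exposed[OF fin] assms(2) a by blast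
      have "eventually (\<lambda>t. a \<in> A1 (\<lambda>i. t * w i) \<and> a \<in> A2 (\<lambda>i. t * w i)) at_top"
        unfolding A1_def A2_def
        using large_t[OF fin a eps w, of s1] large_t[OF fin a eps w, of s2]
        by (rule eventually_conj)
      then obtain N where "\<forall>t\<ge>N. a \<in> A1 (\<lambda>i. t * w i) \<and> a \<in> A2 (\<lambda>i. t * w i)"
        unfolding eventually_at_top_linorder by blast
      hence "a \<in> A1 (\<lambda>i. N * w i) \<and> a \<in> A2 (\<lambda>i. N * w i)" by simp
      thus ?thesis by (rule exI[of _ "\<lambda>i. N * w i"])
    qed
    have const: "s1 a - s2 a = s1 b - s2 b" if a: "a \<in> Y" and b: "b \<in> Y" for a b
    proof -
      obtain za where za: "a \<in> A1 za" "a \<in> A2 za" using zy a by blast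
      obtain zb where zb: "b \<in> A1 zb" "b \<in> A2 zb" using zy b by blast
      define g where "g l = D (\<lambda>i. (1 - l) * za i + l * zb i)" for l :: real
      have ne: "Y \<noteq> {}" using a by blast
      have c1: "continuous_on UNIV (\<lambda>l. Max ((\<lambda>y. s1 y + \<epsilon> * inner_fun (\<lambda>i. (1 - l) * za i + l * zb i) y) ` Y))"
        by (rule cont_Max[OF fin ne]) (intro ballI, unfold inner_fun_comb, intro continuous_on_add continuous_on_mult continuous_on_const continuous_on_diff continuous_on_id)
      have c2: "continuous_on UNIV (\<lambda>l. Max ((\<lambda>y. s2 y + \<epsilon> * inner_fun (\<lambda>i. (1 - l) * za i + l * zb i) y) ` Y))"
        by (rule cont_Max[OF fin ne]) (intro ballI, unfold inner_fun_comb, intro continuous_on_add continuous_on_mult continuous_on_const continuous_on_diff continuous_on_id)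
      have cg: "continuous_on UNIV g" unfolding g_def D_def
        using c1 c2 by (intro continuous_on_diff)
      have "g ` UNIV \<subseteq> (\<lambda>y. s1 y - s2 y) ` Y"
        using Drange unfolding g_def by (intro image_subsetI) 
      hence "finite (g ` UNIV)"
        using fin by (rule finite_subset[OF _ finite_imageI])
      hence "g constant_on UNIV"
        using continuous_finite_range_constant[OF connected_UNIV cg] by blast
      hence "g 0 = g 1" unfolding constant_on_def by (metis UNIV_I)
      moreover have "g 0 = D za" unfolding g_def by simp
      moreover have "g 1 = D zb" unfolding g_def by simp
      ultimately show ?thesis using Dy[OF za] Dy[OF zb] by simp
    qed
    have "s1 = s2"
    proof (cases "Y = {}")
      case True
      have "s1 x = s2 x" for x using assms(4,5) True unfolding V_Delta_def extensional_def by simp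
      thus ?thesis by (rule ext)
    next
      case False
      then obtain b where b: "b \<in> Y" by blast
      have "0 = sum s1 Y - sum s2 Y" using assms(4,5) unfolding V_Delta_def by simp
      also have "\<dots> = (\<Sum>a\<in>Y. s1 a - s2 a)" by (simp add: sum_subtractf)
      also have "\<dots> = (\<Sum>a\<in>Y. s1 b - s2 b)" by (rule sum.cong[OF refl]) (erule const[OF _ b])
      also have "\<dots> = real (card Y) * (s1 b - s2 b)" by simp
      finally have "s1 b - s2 b = 0" using False fin by simp
      hence eqY: "\<forall>a\<in>Y. s1 a = s2 a"
      proof (intro ballI)
        fix a assume "s1 b - s2 b = 0" "a \<in> Y"
        thus "s1 a = s2 a" using const[OF _ b, of a] by simp
      qed
      show ?thesis
      proof
        fix x show "s1 x = s2 x"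
          using eqY assms(4,5) unfolding V_Delta_def extensional_def by (cases "x \<in> Y") auto
      qed
    qed
    thus False using assms(6) by simp
  qed
  then obtain z0 where z0: "A1 z0 \<inter> A2 z0 = {}" by blast
  have "\<forall>y\<in>Y. eventually (\<lambda>\<delta>. \<forall>z. (\<forall>i. \<bar>z i - z0 i\<bar> < \<delta>) \<longrightarrow> y \<notin> A1 z \<inter> A2 z) (at_right 0)"
  proof
    fix y assume y: "y \<in> Y"
    show "eventually (\<lambda>\<delta>. \<forall>z. (\<forall>i. \<bar>z i - z0 i\<bar> < \<delta>) \<longrightarrow> y \<notin> A1 z \<inter> A2 z) (at_right 0)"
    proof (cases "y \<in> A1 z0")
      case True
      hence "y \<notin> A2 z0" using z0 by blast
      from not_argmax_stable[OF y this[unfolded A2_def] eps]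
      show ?thesis unfolding A2_def by (auto elim: eventually_mono)
    next
      case False
      from not_argmax_stable[OF y this[unfolded A1_def] eps]
      show ?thesis unfolding A1_def by (auto elim: eventually_mono)
    qed
  qed
  hence "eventually (\<lambda>\<delta>. \<forall>y\<in>Y. \<forall>z. (\<forall>i. \<bar>z i - z0 i\<bar> < \<delta>) \<longrightarrow> y \<notin> A1 z \<inter> A2 z) (at_right 0)"
    by (rule eventually_ball_finite[OF fin])
  then obtain b :: real where b: "b > 0"
    "\<forall>\<delta>>0. \<delta> < b \<longrightarrow> (\<forall>y\<in>Y. \<forall>z. (\<forall>i. \<bar>z i - z0 i\<bar> < \<delta>) \<longrightarrow> y \<notin> A1 z \<inter> A2 z)"
    unfolding eventually_at_right_field by auto
  define \<delta> where "\<delta> = b / 2"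
  have d: "\<delta> > 0" "\<delta> < b" using b unfolding \<delta>_def by auto
  define Bx where "Bx = PiE UNIV (\<lambda>i. {z0 i - \<delta><..<z0 i + \<delta>})"
  define S where "S = {z \<in> space std_normal_vec.
              argmax_set Y (\<lambda>y. s1 y + \<epsilon> * inner_fun z y)
              \<inter> argmax_set Y (\<lambda>y. s2 y + \<epsilon> * inner_fun z y) = {}}"
  have sub: "Bx \<subseteq> S"
  proof
    fix z assume "z \<in> Bx"
    hence zi: "\<forall>i. \<bar>z i - z0 i\<bar> < \<delta>" unfolding Bx_def by (auto simp: PiE_iff abs_diff_less_iff)
    have "A1 z \<inter> A2 z = {}"
    proof (rule ccontr)
      assume "A1 z \<inter> A2 z \<noteq> {}"
      then obtain y where "y \<in> A1 z \<inter> A2 z" by blast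
      moreover have "y \<in> Y" using calculation unfolding A1_def argmax_set_def by blast
      ultimately show False using b(2)[rule_format, OF d(1) d(2), rule_format, OF \<open>y \<in> Y\<close> zi[rule_format]] by blast
    qed
    moreover have "z \<in> space std_normal_vec" unfolding std_normal_vec_def by (simp add: space_PiM)
    ultimately show "z \<in> S" unfolding S_def A1_def A2_def by blast
  qed
  interpret P: prob_space std_normal_vec unfolding std_normal_vec_def
    by (intro prob_space_PiM) (simp add: prob_space_normal_density)
  have Bsets: "Bx \<in> sets std_normal_vec" unfolding Bx_def std_normal_vec_def
    by (intro sets_PiM_I_finite) auto
  have Ssets: "S \<in> sets std_normal_vec" unfolding S_def by (rule meas_set[OF fin])
  have "0 < emeasure std_normal_vec Bx" unfolding Bx_def by (rule box_pos[OF d(1)])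
  hence "0 < measure std_normal_vec Bx" by (simp add: P.emeasure_eq_measure)
  also have "\<dots> \<le> measure std_normal_vec S" using sub Ssets by (rule P.finite_measure_mono)
  finally show ?thesis unfolding S_def .
qed

end
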